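(* Let $n\ge1$, $d_1,\dots,d_n\ge1$, $d\ge1$ and $a_1,\dots,a_n\in k_d^\times$, and set $S_d(a_\bullet;d_\bullet)=\sum_{(x_1,\dots,x_n)\in k_d^n}\psi_d\Big(\sum_{1\le i\le n}a_ix_ix_{i+1}^{q^{d_i}}\Big)$ with $x_{n+1}=x_1$. If $n\ge3$, then $S_d(a_\bullet;d_\bullet)=q^d\,S_d\big(a_1,\dots,a_{n-3},\,-a_{n-2}a_{n-1}^{-q^{d_{n-2}}}a_n^{q^{d_{n-2}+d_{n-1}}};\ d_1,\dots,d_{n-3},\,d_{n-2}+d_{n-1}+d_n\big)$, a sum of the same type in $n-2$ variables. If $n=2$, then $S_d(a_1,a_2;d_1,d_2)$ equals $q^d$ times the number of $x_1\in k_d$ satisfying $x_1=-a_1^{-1}a_2^{q^{d_1}}x_1^{q^{d_1+d_2}}$.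
   Context: $k$ is a finite field with $q$ elements, $k_d$ its extension of degree $d$ inside a fixed algebraic closure, $\psi\colon k\to\overline{\mathbb Q}_\ell^\times$ a fixed nontrivial additive character and $\psi_d=\psi\circ\mathrm{Tr}_{k_d/k}$. *)

theory Defs
  imports Complex_Main "HOL-Library.FuncSet"
begin

text \<open>The field k_d is modelled by a finite field type 'a with q^d elements;
 k is its subfield of elements fixed by x \<mapsto> x^q (which has q elements).\<close>

definition trace_kd :: "nat \<Rightarrow> nat \<Rightarrow> 'a::field \<Rightarrow> 'a" where
  "trace_kd q d x = (\<Sum>j<d. x ^ (q ^ j))"

definition psi_d :: "nat \<Rightarrow> nat \<Rightarrow> ('a::field \<Rightarrow> complex) \<Rightarrow> 'a \<Rightarrow> complex" where
  "psi_d q d \<psi> x = \<psi> (trace_kd q d x)"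

text \<open>S_d(a;e) in n variables, indices 0-based, x_n = x_0 (cyclic).\<close>
definition Ssum :: "nat \<Rightarrow> nat \<Rightarrow> ('a::{field,finite} \<Rightarrow> complex) \<Rightarrow> nat \<Rightarrow> (nat \<Rightarrow> 'a) \<Rightarrow> (nat \<Rightarrow> nat) \<Rightarrow> complex" where
  "Ssum q d \<psi> n a e =
     (\<Sum>x \<in> PiE {..<n} (\<lambda>_. (UNIV::'a set)).
        psi_d q d \<psi> (\<Sum>i<n. a i * x i * (x ((i + 1) mod n)) ^ (q ^ e i)))"

end

theory Submission
  imports Defs "HOL-Algebra.Sylow" "HOL-Algebra.Multiplicative_Group" "HOL-Computational_Algebra.Primes" "HOL-Computational_Algebra.Polynomial"
begin

definition addgrp :: "'a::field itself \<Rightarrow> 'a monoid" where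
  "addgrp _ = \<lparr>carrier = UNIV, monoid.mult = (+), one = 0\<rparr>"

lemma addgrp_group: "group (addgrp TYPE('a::field))"
  unfolding addgrp_def
  apply (rule groupI)
  apply (auto simp: add.assoc)
  by (metis add.left_inverse)

lemma addgrp_pow: "x [^]\<^bsub>(addgrp TYPE('a::field))\<lparr>carrier := H\<rparr>\<^esub> (n::nat) = of_nat n * (x::'a)"
  by (induction n) (auto simp: addgrp_def distrib_right)

lemma addgrp_pow2: "x [^]\<^bsub>\<lparr>carrier = H, monoid.mult = (+), one = 0\<rparr>\<^esub> (n::nat) = of_nat n * (x::'a::field)"
  by (induction n) (auto simp: distrib_right)

lemma prime_dvd_card_CHAR:
  assumes r: "prime r" and dv: "r dvd card (UNIV :: 'a::{field,finite} set)"
  shows "r = CHAR('a)"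
proof -
  let ?G = "addgrp TYPE('a)"
  have gG: "group ?G" by (rule addgrp_group)
  obtain m where m: "card (UNIV :: 'a set) = r ^ 1 * m" using dv by auto
  have "Coset.order ?G = r ^ 1 * m" using m by (simp add: Coset.order_def addgrp_def)
  from sylow_thm[OF r gG this] obtain H where H: "subgroup H ?G" "card H = r ^ 1"
    by (auto simp: addgrp_def)
  have gH: "group (?G\<lparr>carrier := H\<rparr>)" using H(1) gG by (simp add: group.subgroup_imp_group)
  have "card H \<ge> 2" using H(2) r prime_ge_2_nat by auto
  moreover have "H \<subseteq> {0} \<Longrightarrow> card H \<le> 1"
    using card_mono[of "{0::'a}" H] by simp
  ultimately have "\<not> H \<subseteq> {0}" by linarith
  then obtain x where x: "x \<in> H" "x \<noteq> 0" by auto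
  have "x [^]\<^bsub>?G\<lparr>carrier := H\<rparr>\<^esub> Coset.order (?G\<lparr>carrier := H\<rparr>) = \<one>\<^bsub>?G\<lparr>carrier := H\<rparr>\<^esub>"
    using group.pow_order_eq_1[OF gH] x by simp
  then have "of_nat r * x = 0" using H(2)
    by (simp add: addgrp_pow2 Coset.order_def addgrp_def)
  then have "of_nat r = (0::'a)" using x by simp
  then have "CHAR('a) dvd r" by (simp add: of_nat_eq_0_iff_char_dvd)
  moreover have "prime CHAR('a)"
    by (simp add: finite_imp_CHAR_pos prime_CHAR_semidom)
  ultimately show ?thesis using r
    by (metis prime_nat_iff prime_gt_1_nat less_irrefl)
qed

lemma pow_of_only_prime:
  fixes n p :: nat
  shows "n > 0 \<Longrightarrow> (\<forall>r. prime r \<longrightarrow> r dvd n \<longrightarrow> r = p) \<Longrightarrow> \<exists>k. n = p ^ k"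
proof (induction n rule: less_induct)
  case (less n)
  show ?case
  proof (cases "n = 1")
    case True then show ?thesis by (intro exI[of _ 0]) simp
  next
    case False
    then obtain r where r: "prime r" "r dvd n" using prime_factor_nat by blast
    then have rp: "r = p" using less.prems by blast
    then obtain m where m: "n = p * m" using r by auto
    have p2: "p \<ge> 2" using r rp prime_ge_2_nat by blast
    have m0: "m > 0" using m less.prems by (cases m) auto
    have "m < n" using m p2 m0 by simp
    moreover have "\<forall>r. prime r \<longrightarrow> r dvd m \<longrightarrow> r = p" using less.prems m by auto
    ultimately obtain k where "m = p ^ k" using less.IH m0 by blast
    then show ?thesis using m by (intro exI[of _ "Suc k"]) simp
  qed
qed

lemma field_pow_card:
  fixes x :: "'a :: {field,finite}"
  shows "x ^ card (UNIV :: 'a set) = x"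
proof (cases "x = 0")
  case False
  have "x * (\<Prod>y\<in>UNIV-{0}. x * y) = x * x ^ (card (UNIV :: 'a set) - 1) * \<Prod>(UNIV-{0})"
    by (simp add: prod.distrib mult_ac)
  also have "x * x ^ (card (UNIV :: 'a set) - 1) = x ^ Suc (card (UNIV :: 'a set) - 1)"
    by (subst power_Suc) auto
  also have "Suc (card (UNIV :: 'a set) - 1) = card (UNIV :: 'a set)"
    using finite_UNIV_card_ge_0[where ?'a = 'a] by simp
  also have "(\<Prod>y\<in>UNIV-{0}. x * y) = (\<Prod>y\<in>UNIV-{0}. y)"
    by (rule prod.reindex_bij_witness[of _ "\<lambda>y. y / x" "\<lambda>y. x * y"]) (use False in auto)
  finally show ?thesis
    by simp
qed (use finite_UNIV_card_ge_0[where ?'a = 'a] in auto)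

lemma sum_PiE_Suc:
  "(\<Sum>x\<in>PiE {..<Suc m} (\<lambda>_. UNIV::'b set). F x) =
   (\<Sum>y\<in>PiE {..<m} (\<lambda>_. UNIV). \<Sum>v\<in>UNIV. F (y(m := v)))" for F :: "(nat \<Rightarrow> 'b::finite) \<Rightarrow> complex"
proof -
  have "PiE {..<Suc m} (\<lambda>_. UNIV::'b set) = (\<lambda>(v, g). g(m := v)) ` (UNIV \<times> PiE {..<m} (\<lambda>_. UNIV))"
    by (simp add: lessThan_Suc PiE_insert_eq)
  moreover have inj: "inj_on (\<lambda>(v, g). g(m := v)) (UNIV \<times> PiE {..<m} (\<lambda>_. UNIV::'b set))"
    using inj_combinator[of m "{..<m}" "\<lambda>_. UNIV::'b set"] by simp
  ultimately have "(\<Sum>x\<in>PiE {..<Suc m} (\<lambda>_. UNIV::'b set). F x) =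
      (\<Sum>p\<in>UNIV \<times> PiE {..<m} (\<lambda>_. UNIV). F ((\<lambda>(v, g). g(m := v)) p))"
    using sum.reindex[OF inj, of F] by (simp add: o_def)
  also have "\<dots> = (\<Sum>v\<in>UNIV. \<Sum>y\<in>PiE {..<m} (\<lambda>_. UNIV). F (y(m := v)))"
    unfolding sum.cartesian_product by (simp add: split_def)
  also have "\<dots> = (\<Sum>y\<in>PiE {..<m} (\<lambda>_. UNIV). \<Sum>v\<in>UNIV. F (y(m := v)))"
    by (rule sum.swap)
  finally show ?thesis .
qed

lemma add0_iff: "((x::'a::field) + B = 0) \<longleftrightarrow> (x = - B)"
  by (simp add: eq_neg_iff_add_eq_0)

locale frobctx =
  fixes q d :: nat and \<psi> :: "'a::{field,finite} \<Rightarrow> complex"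
  assumes q: "q \<ge> 2" and d: "d \<ge> 1"
    and card_kd: "card (UNIV::'a set) = q ^ d"
    and psi_add: "\<And>x y. x ^ q = x \<Longrightarrow> y ^ q = y \<Longrightarrow> \<psi> (x + y) = \<psi> x * \<psi> y"
    and psi_nz: "\<And>x. x ^ q = x \<Longrightarrow> \<psi> x \<noteq> 0"
    and psi_nontriv: "\<exists>x. x ^ q = x \<and> \<psi> x \<noteq> 1"
begin

lemma primeCHAR: "prime CHAR('a)"
  by (simp add: finite_imp_CHAR_pos prime_CHAR_semidom)

lemma q_pow: "\<exists>k. q = CHAR('a) ^ k"
proof (rule pow_of_only_prime)
  show "q > 0" using q by simp
  show "\<forall>r. prime r \<longrightarrow> r dvd q \<longrightarrow> r = CHAR('a)"
  proof (intro allI impI)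
    fix r :: nat assume "prime r" "r dvd q"
    then have "r dvd card (UNIV :: 'a set)" using card_kd d
      by (metis dvd_power dvd_trans not_one_le_zero le_neq_implies_less less_one zero_less_iff_neq_zero)
    then show "r = CHAR('a)" using prime_dvd_card_CHAR \<open>prime r\<close> by blast
  qed
qed

lemma frob_add: "(x + y :: 'a) ^ (q ^ j) = x ^ (q ^ j) + y ^ (q ^ j)"
proof -
  obtain k where k: "q = CHAR('a) ^ k" using q_pow by blast
  show ?thesis
    by (rule freshmans_dream'[OF primeCHAR, where n="k*j"]) (simp add: k power_mult)
qed

lemma frob_sum: "(sum f A :: 'a) ^ (q ^ j) = (\<Sum>i\<in>A. f i ^ (q ^ j))"
proof -
  obtain k where k: "q = CHAR('a) ^ k" using q_pow by blast
  show ?thesis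
    by (rule freshmans_dream_sum'[OF primeCHAR, where n="k*j"]) (simp add: k power_mult)
qed

lemma frob_neg: "(- x :: 'a) ^ (q ^ j) = - (x ^ (q ^ j))"
proof -
  have "x ^ (q ^ j) + (- x) ^ (q ^ j) = (x + - x) ^ (q ^ j)" by (simp only: frob_add)
  also have "\<dots> = 0" using q by simp
  finally show ?thesis by (simp add: add_eq_0_iff)
qed

lemma pow_qd: "(x :: 'a) ^ (q ^ d) = x"
  using field_pow_card[of x] card_kd by simp

lemma pow_qdj: "(x :: 'a) ^ (q ^ (d * j)) = x"
proof (induction j)
  case (Suc j)
  have "x ^ (q ^ (d * Suc j)) = (x ^ (q ^ (d * j))) ^ (q ^ d)"
    by (simp add: power_add power_mult[symmetric] mult.commute)
  then show ?case using Suc pow_qd by simp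
qed simp

lemma frob_K: "(l :: 'a) ^ q = l \<Longrightarrow> l ^ (q ^ j) = l"
proof (induction j)
  case (Suc j)
  then show ?case by (simp add: power_mult)
qed simp

abbreviation Tr :: "'a \<Rightarrow> 'a" where "Tr \<equiv> trace_kd q d"
abbreviation "pd \<equiv> psi_d q d \<psi>"

lemma tr_add: "Tr (x + y) = Tr x + Tr y"
  unfolding trace_kd_def by (simp add: frob_add sum.distrib)

lemma tr_K: "(Tr x) ^ q = Tr x"
proof -
  have "(Tr x) ^ q = (Tr x) ^ (q ^ 1)" by simp
  also have "\<dots> = (\<Sum>j<d. (x ^ (q ^ j)) ^ (q ^ 1))" unfolding trace_kd_def by (rule frob_sum)
  also have "\<dots> = (\<Sum>j<d. x ^ (q ^ Suc j))" by (simp add: power_mult[symmetric] mult.commute)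
  also have "\<dots> = Tr x"
  proof -
    have "(\<Sum>j<Suc d. x ^ (q ^ j)) = x ^ (q ^ 0) + (\<Sum>j<d. x ^ (q ^ Suc j))"
      by (rule sum.lessThan_Suc_shift)
    moreover have "(\<Sum>j<Suc d. x ^ (q ^ j)) = (\<Sum>j<d. x ^ (q ^ j)) + x ^ (q ^ d)"
      by simp
    ultimately show ?thesis unfolding trace_kd_def using pow_qd by simp
  qed
  finally show ?thesis .
qed

lemma tr_frob1: "Tr (x ^ q) = Tr x"
proof -
  have "Tr (x ^ q) = (\<Sum>j<d. (x ^ (q ^ j)) ^ (q ^ 1))"
    unfolding trace_kd_def by (simp add: power_mult[symmetric] mult.commute)
  also have "\<dots> = (Tr x) ^ (q ^ 1)" unfolding trace_kd_def by (rule frob_sum[symmetric])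
  finally show ?thesis using tr_K by simp
qed

lemma tr_frob: "Tr (x ^ (q ^ E)) = Tr x"
proof (induction E)
  case (Suc E)
  have "x ^ (q ^ Suc E) = (x ^ (q ^ E)) ^ q" by (simp add: power_mult[symmetric] mult.commute)
  then show ?case using Suc tr_frob1 by simp
qed simp

lemma tr_scale: assumes "l ^ q = l" shows "Tr (l * x) = l * Tr x"
  unfolding trace_kd_def using frob_K[OF assms] by (simp add: power_mult_distrib frob_K sum_distrib_left)

lemma tr_zero: "Tr 0 = 0"
  unfolding trace_kd_def using q by (simp add: power_0_left)

lemma tr_nonzero: "\<exists>y. Tr y \<noteq> 0"
proof (rule ccontr)
  assume "\<not> (\<exists>y. Tr y \<noteq> 0)"
  then have all0: "\<And>y. Tr y = 0" by blast
  define P :: "'a poly" where "P = (\<Sum>j<d. monom 1 (q ^ j))"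
  have polyP: "poly P x = Tr x" for x
    unfolding P_def trace_kd_def by (simp add: poly_sum poly_monom)
  have inj: "q ^ i = q ^ j \<longleftrightarrow> i = j" for i j using q by (simp add: power_inject_exp)
  have cP: "coeff P i = (\<Sum>j<d. if q ^ j = i then 1 else 0)" for i
    unfolding P_def by (simp add: coeff_sum coeff_monom)
  have "coeff P (q ^ (d - 1)) = (\<Sum>j<d. if j = d - 1 then 1 else 0)"
    unfolding cP by (simp add: inj)
  also have "\<dots> = 1" using d by simp
  finally have P0: "P \<noteq> 0" by auto
  have "degree P \<le> q ^ (d - 1)"
  proof (rule degree_le, intro allI impI)
    fix i assume i: "q ^ (d - 1) < i"
    have "q ^ j \<noteq> i" if "j < d" for j
    proof -
      have "q ^ j \<le> q ^ (d - 1)" using that q by (intro power_increasing) auto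
      then show ?thesis using i by simp
    qed
    then show "coeff P i = 0" unfolding cP by simp
  qed
  moreover have "card {x. poly P x = 0} \<le> degree P" by (rule card_poly_roots_bound[OF P0])
  moreover have "{x. poly P x = 0} = UNIV" using all0 polyP by auto
  ultimately have "q ^ d \<le> q ^ (d - 1)" using card_kd by simp
  moreover have "q ^ (d - 1) < q ^ d" using q d by (intro power_strict_increasing) auto
  ultimately show False by simp
qed

lemma psi0: "\<psi> 0 = 1"
proof -
  have "\<psi> 0 = \<psi> 0 * \<psi> 0" using psi_add[of 0 0] q by simp
  moreover have "\<psi> 0 \<noteq> 0" using psi_nz[of 0] q by simp
  ultimately show ?thesis by (metis mult_cancel_left1)
qed

lemma pd_add: "pd (x + y) = pd x * pd y"
  unfolding psi_d_def tr_add using psi_add tr_K by blast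

lemma pd_zero: "pd 0 = 1"
  unfolding psi_d_def tr_zero psi0 by simp

lemma pd_nontriv: "\<exists>y. pd y \<noteq> 1"
proof -
  obtain t where t: "t ^ q = t" "\<psi> t \<noteq> 1" using psi_nontriv by blast
  obtain y0 where y0: "Tr y0 \<noteq> 0" using tr_nonzero by blast
  define s where "s = Tr y0"
  have sK: "s ^ q = s" unfolding s_def by (rule tr_K)
  have lK: "(t / s) ^ q = t / s" using t sK by (simp add: power_divide)
  have "Tr ((t / s) * y0) = t"
    using tr_scale[OF lK] y0 by (simp add: s_def)
  then show ?thesis using t by (intro exI[of _ "(t / s) * y0"]) (simp add: psi_d_def)
qed

lemma orth: "(\<Sum>y\<in>UNIV. pd (c * y)) = (if c = 0 then of_nat (q ^ d) else 0)"
proof (cases "c = 0")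
  case True
  then show ?thesis using card_kd by (simp add: pd_zero)
next
  case False
  have "(\<Sum>y\<in>UNIV. pd (c * y)) = (\<Sum>y\<in>UNIV. pd y)"
    by (rule sum.reindex_bij_witness[of _ "\<lambda>y. y / c" "\<lambda>y. c * y"]) (use False in auto)
  moreover have "(\<Sum>y\<in>UNIV. pd y) = 0"
  proof -
    obtain y1 where y1: "pd y1 \<noteq> 1" using pd_nontriv by blast
    have "(\<Sum>y\<in>UNIV. pd y) = (\<Sum>y\<in>UNIV. pd (y + y1))"
      by (rule sum.reindex_bij_witness[of _ "\<lambda>y. y + y1" "\<lambda>y. y - y1"]) auto
    also have "\<dots> = (\<Sum>y\<in>UNIV. pd y) * pd y1" by (simp add: pd_add sum_distrib_right)
    finally have "(\<Sum>y\<in>UNIV. pd y) * (1 - pd y1) = 0" by (simp add: algebra_simps)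
    then show ?thesis using y1 by simp
  qed
  ultimately show ?thesis using False by simp
qed

lemma kill: "(\<Sum>v\<in>UNIV. pd (A * v ^ (q ^ E) + B * v)) =
   (if A ^ (q ^ ((d - 1) * E)) + B = 0 then of_nat (q ^ d) else 0)"
proof -
  let ?F = "(d - 1) * E"
  have eq: "Tr (A * v ^ (q ^ E)) = Tr (A ^ (q ^ ?F) * v)" for v
  proof -
    have "Tr (A * v ^ (q ^ E)) = Tr ((A * v ^ (q ^ E)) ^ (q ^ ?F))" by (rule tr_frob[symmetric])
    also have "(A * v ^ (q ^ E)) ^ (q ^ ?F) = A ^ (q ^ ?F) * v ^ (q ^ (d * E))"
    proof -
      have "E + ?F = d * E" using d by (cases d) auto
      then have "q ^ E * q ^ ?F = q ^ (d * E)" by (metis power_add)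
      then show ?thesis by (simp add: power_mult_distrib power_mult[symmetric])
    qed
    finally show ?thesis by (simp add: pow_qdj)
  qed
  have "pd (A * v ^ (q ^ E) + B * v) = pd ((A ^ (q ^ ?F) + B) * v)" for v
    unfolding psi_d_def tr_add eq by (simp add: distrib_right tr_add)
  then show ?thesis by (simp add: orth)
qed

lemma frob_inv: "((z::'a) ^ (q ^ ((d - 1) * E)) = w) \<longleftrightarrow> (z = w ^ (q ^ E))"
proof -
  let ?F = "(d - 1) * E"
  have e: "q ^ ?F * q ^ E = q ^ (d * E)"
  proof -
    have "?F + E = d * E" using d by (cases d) auto
    then show ?thesis by (metis power_add)
  qed
  have "(z ^ (q ^ ?F)) ^ (q ^ E) = z ^ (q ^ ?F * q ^ E)" by (rule power_mult[symmetric])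
  also have "\<dots> = z ^ (q ^ (d * E))" by (simp only: e)
  finally have 1: "(z ^ (q ^ ?F)) ^ (q ^ E) = z" by (simp only: pow_qdj)
  have "(w ^ (q ^ E)) ^ (q ^ ?F) = w ^ (q ^ ?F * q ^ E)" by (simp only: power_mult[symmetric] mult.commute)
  also have "\<dots> = w ^ (q ^ (d * E))" by (simp only: e)
  finally have 2: "(w ^ (q ^ E)) ^ (q ^ ?F) = w" by (simp only: pow_qdj)
  show ?thesis
  proof
    assume h: "z ^ (q ^ ?F) = w"
    show "z = w ^ (q ^ E)" using 1 unfolding h by (rule sym)
  next
    assume h: "z = w ^ (q ^ E)"
    show "z ^ (q ^ ?F) = w" unfolding h by (rule 2)
  qed
qed

lemma cond: assumes "(\<alpha>::'a) \<noteq> 0"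
  shows "((\<alpha> * u) ^ (q ^ ((d - 1) * E)) + B = 0) \<longleftrightarrow> (u = - inverse \<alpha> * B ^ (q ^ E))"
proof -
  have "((\<alpha> * u) ^ (q ^ ((d - 1) * E)) + B = 0) \<longleftrightarrow> ((\<alpha> * u) ^ (q ^ ((d - 1) * E)) = - B)"
    by (rule add0_iff)
  also have "\<dots> \<longleftrightarrow> \<alpha> * u = (- B) ^ (q ^ E)" by (rule frob_inv)
  also have "\<dots> \<longleftrightarrow> \<alpha> * u = - (B ^ (q ^ E))" by (simp add: frob_neg)
  also have "\<dots> \<longleftrightarrow> u = - inverse \<alpha> * B ^ (q ^ E)" using assms by (auto simp: field_simps)
  finally show ?thesis .
qed

lemma red3:
  fixes a :: "nat \<Rightarrow> 'a" and e :: "nat \<Rightarrow> nat"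
  assumes a1: "a (Suc k) \<noteq> 0"
  shows "Ssum q d \<psi> (Suc (Suc (Suc k))) a e = of_nat (q ^ d) * Ssum q d \<psi> (Suc k)
     (a(k := - a k * inverse (a (Suc k)) ^ (q ^ e k) * a (Suc (Suc k)) ^ (q ^ (e k + e (Suc k)))))
     (e(k := e k + e (Suc k) + e (Suc (Suc k))))"
proof -
  define K where "K = Suc (Suc (Suc k))"
  define f where "f x = (\<Sum>i<K. a i * x i * x ((i + 1) mod K) ^ (q ^ e i))" for x
  define a' where "a' = a(k := - a k * inverse (a (Suc k)) ^ (q ^ e k) * a (Suc (Suc k)) ^ (q ^ (e k + e (Suc k))))"
  define e' where "e' = e(k := e k + e (Suc k) + e (Suc (Suc k)))"
  define g where "g y = (\<Sum>i<Suc k. a' i * y i * y ((i + 1) mod Suc k) ^ (q ^ e' i))" for y :: "nat \<Rightarrow> 'a"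
  define G where "G y = (\<Sum>i<k. a i * y i * y (Suc i) ^ (q ^ e i))" for y :: "nat \<Rightarrow> 'a"
  define E where "E = e (Suc k)"
  define \<alpha> where "\<alpha> = a (Suc k)"
  define B where "B y = a (Suc (Suc k)) * y 0 ^ (q ^ e (Suc (Suc k)))" for y :: "nat \<Rightarrow> 'a"
  define H where "H y u = G y + a k * y k * u ^ (q ^ e k)" for y u
  define u0 where "u0 y = - inverse \<alpha> * B y ^ (q ^ E)" for y
  define Q where "Q = (of_nat (q ^ d) :: complex)"
  have fz: "f (y(Suc k := u, Suc (Suc k) := v)) = H y u + (\<alpha> * u * v ^ (q ^ E) + B y * v)" for y u v
  proof -
    let ?z = "y(Suc k := u, Suc (Suc k) := v)"
    have s1: "(\<Sum>i<k. a i * ?z i * ?z ((i + 1) mod K) ^ (q ^ e i)) = G y"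
      unfolding G_def by (rule sum.cong) (auto simp: K_def)
    have "f ?z = (\<Sum>i<k. a i * ?z i * ?z ((i + 1) mod K) ^ (q ^ e i))
       + a k * ?z k * ?z ((k + 1) mod K) ^ (q ^ e k)
       + a (Suc k) * ?z (Suc k) * ?z ((Suc k + 1) mod K) ^ (q ^ e (Suc k))
       + a (Suc (Suc k)) * ?z (Suc (Suc k)) * ?z ((Suc (Suc k) + 1) mod K) ^ (q ^ e (Suc (Suc k)))"
      unfolding f_def K_def by (simp only: sum.lessThan_Suc)
    also have "\<dots> = G y + a k * y k * u ^ (q ^ e k) + \<alpha> * u * v ^ (q ^ E) + a (Suc (Suc k)) * v * y 0 ^ (q ^ e (Suc (Suc k)))"
    proof -
      have m1: "(k + 1) mod K = Suc k" "(Suc k + 1) mod K = Suc (Suc k)" "(Suc (Suc k) + 1) mod K = 0"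
        unfolding K_def by simp_all
      show ?thesis unfolding s1 m1 by (simp add: \<alpha>_def E_def)
    qed
    finally show ?thesis unfolding H_def B_def by (simp add: algebra_simps)
  qed
  have gy: "g y = H y (u0 y)" for y
  proof -
    have s1: "(\<Sum>i<k. a' i * y i * y ((i + 1) mod Suc k) ^ (q ^ e' i)) = G y"
      unfolding G_def by (rule sum.cong) (auto simp: a'_def e'_def)
    have "g y = (\<Sum>i<k. a' i * y i * y ((i + 1) mod Suc k) ^ (q ^ e' i)) + a' k * y k * y 0 ^ (q ^ e' k)"
      unfolding g_def by simp
    also have "\<dots> = G y + a' k * y k * y 0 ^ (q ^ e' k)" by (simp only: s1)
    finally have g1: "g y = G y + a' k * y k * y 0 ^ (q ^ e' k)" .
    have h1: "u0 y ^ (q ^ e k) = - (inverse \<alpha> ^ (q ^ e k)) * (a (Suc (Suc k)) ^ (q ^ (e k + E)) * y 0 ^ (q ^ (e k + E + e (Suc (Suc k)))))"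
      unfolding u0_def B_def
      by (simp add: power_mult_distrib frob_neg power_mult[symmetric] power_add mult_ac)
    show ?thesis unfolding g1 H_def h1
      by (simp add: a'_def e'_def \<alpha>_def E_def algebra_simps)
  qed
  have inner: "(\<Sum>u\<in>UNIV. \<Sum>v\<in>UNIV. pd (f (y(Suc k := u, Suc (Suc k) := v)))) = Q * pd (g y)" for y
  proof -
    have "(\<Sum>u\<in>UNIV. \<Sum>v\<in>UNIV. pd (f (y(Suc k := u, Suc (Suc k) := v))))
        = (\<Sum>u\<in>UNIV. pd (H y u) * (\<Sum>v\<in>UNIV. pd ((\<alpha> * u) * v ^ (q ^ E) + B y * v)))"
      unfolding fz by (simp add: pd_add sum_distrib_left mult.assoc)
    also have "\<dots> = (\<Sum>u\<in>UNIV. pd (H y u) * (if u = u0 y then Q else 0))"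
      unfolding kill Q_def using cond[of \<alpha>] a1 by (simp add: \<alpha>_def u0_def)
    also have "\<dots> = Q * pd (H y (u0 y))"
      by (simp add: if_distrib[of "\<lambda>x. _ * x"] cong: if_cong)
    finally show ?thesis using gy by simp
  qed
  have "Ssum q d \<psi> K a e = (\<Sum>x\<in>PiE {..<K} (\<lambda>_. UNIV). pd (f x))"
    unfolding Ssum_def f_def by simp
  also have "\<dots> = (\<Sum>y\<in>PiE {..<Suc k} (\<lambda>_. UNIV). \<Sum>u\<in>UNIV. \<Sum>v\<in>UNIV. pd (f (y(Suc k := u, Suc (Suc k) := v))))"
    unfolding K_def by (subst sum_PiE_Suc, subst sum_PiE_Suc) (rule refl)
  also have "\<dots> = (\<Sum>y\<in>PiE {..<Suc k} (\<lambda>_. UNIV). Q * pd (g y))"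
    using inner by simp
  also have "\<dots> = Q * Ssum q d \<psi> (Suc k) a' e'"
    unfolding Ssum_def g_def by (simp add: sum_distrib_left)
  finally show ?thesis unfolding K_def Q_def a'_def e'_def .
qed

lemma red2:
  fixes a :: "nat \<Rightarrow> 'a" and e :: "nat \<Rightarrow> nat"
  assumes a0: "a 0 \<noteq> 0"
  shows "Ssum q d \<psi> 2 a e = of_nat (q ^ d) * of_nat (card {x::'a.
                 x = - inverse (a 0) * (a 1) ^ (q ^ e 0) * x ^ (q ^ (e 0 + e 1))})"
proof -
  define P where "P u = (u = - inverse (a 0) * (a 1) ^ (q ^ e 0) * u ^ (q ^ (e 0 + e 1)))" for u :: 'a
  define f where "f x = (\<Sum>i<Suc (Suc 0). a i * x i * x ((i + 1) mod Suc (Suc 0)) ^ (q ^ e i))" for x :: "nat \<Rightarrow> 'a"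
  have fz: "f (y(0 := u, Suc 0 := v)) = (a 0 * u) * v ^ (q ^ e 0) + (a 1 * u ^ (q ^ e 1)) * v" for y u v
    unfolding f_def by (simp add: algebra_simps)
  have inner: "(\<Sum>v\<in>UNIV. pd (f (y(0 := u, Suc 0 := v)))) = (if P u then of_nat (q ^ d) else 0)" for y u
  proof -
    have "(\<Sum>v\<in>UNIV. pd (f (y(0 := u, Suc 0 := v)))) =
      (if u = - inverse (a 0) * (a 1 * u ^ (q ^ e 1)) ^ (q ^ e 0) then of_nat (q ^ d) else 0)"
      unfolding fz kill cond[OF a0] by (rule refl)
    moreover have "(a 1 * u ^ (q ^ e 1)) ^ (q ^ e 0) = a 1 ^ (q ^ e 0) * u ^ (q ^ (e 0 + e 1))"
      by (simp add: power_mult_distrib power_mult[symmetric] power_add mult_ac)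
    ultimately show ?thesis unfolding P_def by (simp add: mult.assoc)
  qed
  have "Ssum q d \<psi> 2 a e = (\<Sum>x\<in>PiE {..<Suc (Suc 0)} (\<lambda>_. UNIV). pd (f x))"
    unfolding Ssum_def f_def by (simp add: numeral_2_eq_2)
  also have "\<dots> = (\<Sum>y\<in>PiE {..<0} (\<lambda>_. UNIV). \<Sum>u\<in>UNIV. \<Sum>v\<in>UNIV. pd (f (y(0 := u, Suc 0 := v))))"
    by (subst sum_PiE_Suc, subst sum_PiE_Suc) (rule refl)
  also have "\<dots> = (\<Sum>u\<in>UNIV. if P u then of_nat (q ^ d) else 0)"
    using inner by simp
  also have "\<dots> = of_nat (q ^ d) * of_nat (card {u. P u})"
    by (simp add: sum.If_cases)
  finally show ?thesis unfolding P_def .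
qed

end

theorem mainTheorem6:
  fixes \<psi> :: "'a::{field,finite} \<Rightarrow> complex"
    and q d n :: nat and a :: "nat \<Rightarrow> 'a" and e :: "nat \<Rightarrow> nat"
  assumes q: "q \<ge> 2" and d: "d \<ge> 1"
    and card_kd: "card (UNIV::'a set) = q ^ d"
    and card_k: "card {x::'a. x ^ q = x} = q"
    and psi_add: "\<And>x y. x ^ q = x \<Longrightarrow> y ^ q = y \<Longrightarrow> \<psi> (x + y) = \<psi> x * \<psi> y"
    and psi_nz: "\<And>x. x ^ q = x \<Longrightarrow> \<psi> x \<noteq> 0"
    and psi_nontriv: "\<exists>x. x ^ q = x \<and> \<psi> x \<noteq> 1"
    and n: "n \<ge> 1"
    and e_pos: "\<And>i. i < n \<Longrightarrow> e i \<ge> 1"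
    and a_nz: "\<And>i. i < n \<Longrightarrow> a i \<noteq> 0"
  shows "(n \<ge> 3 \<longrightarrow>
            Ssum q d \<psi> n a e =
              of_nat (q ^ d) * Ssum q d \<psi> (n - 2)
                (a (n - 3 := - a (n - 3) * (inverse (a (n - 2))) ^ (q ^ e (n - 3))
                              * (a (n - 1)) ^ (q ^ (e (n - 3) + e (n - 2)))))
                (e (n - 3 := e (n - 3) + e (n - 2) + e (n - 1))))
       \<and> (n = 2 \<longrightarrow>
            Ssum q d \<psi> 2 a e =
              of_nat (q ^ d) * of_nat (card {x::'a.
                 x = - inverse (a 0) * (a 1) ^ (q ^ e 0) * x ^ (q ^ (e 0 + e 1))}))"
proof -
  interpret frobctx q d \<psi>
    using q d card_kd psi_add psi_nz psi_nontriv by unfold_locales auto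
  show ?thesis
  proof (intro conjI impI)
    assume n3: "n \<ge> 3"
    define k where "k = n - 3"
    have k: "n = Suc (Suc (Suc k))" using n3 unfolding k_def by simp
    have "a (Suc k) \<noteq> 0" using a_nz k by simp
    from red3[where a=a and k=k and e=e, OF this] show "Ssum q d \<psi> n a e =
              of_nat (q ^ d) * Ssum q d \<psi> (n - 2)
                (a (n - 3 := - a (n - 3) * (inverse (a (n - 2))) ^ (q ^ e (n - 3))
                              * (a (n - 1)) ^ (q ^ (e (n - 3) + e (n - 2)))))
                (e (n - 3 := e (n - 3) + e (n - 2) + e (n - 1)))"
      using k by simp
  next
    assume n2: "n = 2"
    have "a 0 \<noteq> 0" using a_nz n2 by simp
    from red2[where a=a and e=e, OF this] show "Ssum q d \<psi> 2 a e =
              of_nat (q ^ d) * of_nat (card {x::'a.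
                 x = - inverse (a 0) * (a 1) ^ (q ^ e 0) * x ^ (q ^ (e 0 + e 1))})" .
  qed
qed

end
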